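(* Let $M=\{1,\dots,m\}$ carry the measure $\mu$ with atoms of positive masses $\mu_1,\dots,\mu_m$, and $N=\{1,\dots,n\}$ the measure $\nu$ with atoms of positive masses $\nu_1,\dots,\nu_n$. For real $m\times n$ matrices $a$ set $$\|a\|=\max_{i\in M}\sum_{j\in N}|a(i,j)|\nu_j,\qquad \|a\|^{\top}=\max_{j\in N}\sum_{i\in M}|a(i,j)|\mu_i,\qquad \|a\|_{\ell^1}=\sum_{(i,j)\in M\times N}|a(i,j)|\mu_i\nu_j,$$ and for $t>0$ $$|||a|||_t=\sup_{E,F}\big(\mu(E)\vee t^{-1}\nu(F)\big)^{-1}\,\|1_{E\times F}\cdot a\|_{\ell^1},$$ the supremum over nonempty $E\subset M$, $F\subset N$. Let $K_t(a)=\inf\{\|b\|+t\|c\|^{\top}: a=b+c\}$. Let $t>0$. Then for any matrix $a$ with $|||a|||_t\le 1$ there is a splitting $M\times N=A\cup B$ with $A\cap B=\emptyset$ such that $$\|1_A\cdot a\|\le 1,\qquad \|1_B\cdot a\|^{\top}\le 1/t;$$ consequently $K_t(a)\le 2\,|||a|||_t$ for every matrix $a$.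
   Context: $1_S$ denotes the indicator function of a set $S\subset M\times N$, and $\cdot$ denotes entrywise (pointwise) multiplication of matrices: $(b\cdot c)(i,j)=b(i,j)c(i,j)$. $u\vee v=\max(u,v)$. *)

theory Defs
  imports Complex_Main
begin

text \<open>Matrices on M = {1..m}, N = {1..n} are functions nat => nat => real;
  only entries on {1..m} x {1..n} matter. Masses mu i, nu j.\<close>

definition row_norm :: "nat \<Rightarrow> nat \<Rightarrow> (nat \<Rightarrow> real) \<Rightarrow> (nat \<Rightarrow> nat \<Rightarrow> real) \<Rightarrow> real" where
  "row_norm m n \<nu> a = Max ((\<lambda>i. \<Sum>j\<in>{1..n}. \<bar>a i j\<bar> * \<nu> j) ` {1..m})"

definition col_norm :: "nat \<Rightarrow> nat \<Rightarrow> (nat \<Rightarrow> real) \<Rightarrow> (nat \<Rightarrow> nat \<Rightarrow> real) \<Rightarrow> real" where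
  "col_norm m n \<mu> a = Max ((\<lambda>j. \<Sum>i\<in>{1..m}. \<bar>a i j\<bar> * \<mu> i) ` {1..n})"

definition l1_norm :: "nat \<Rightarrow> nat \<Rightarrow> (nat \<Rightarrow> real) \<Rightarrow> (nat \<Rightarrow> real) \<Rightarrow> (nat \<Rightarrow> nat \<Rightarrow> real) \<Rightarrow> real" where
  "l1_norm m n \<mu> \<nu> a = (\<Sum>i\<in>{1..m}. \<Sum>j\<in>{1..n}. \<bar>a i j\<bar> * \<mu> i * \<nu> j)"

definition ind_mult :: "(nat \<times> nat) set \<Rightarrow> (nat \<Rightarrow> nat \<Rightarrow> real) \<Rightarrow> (nat \<Rightarrow> nat \<Rightarrow> real)" where
  "ind_mult S a = (\<lambda>i j. if (i, j) \<in> S then a i j else 0)"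

definition meas :: "(nat \<Rightarrow> real) \<Rightarrow> nat set \<Rightarrow> real" where
  "meas w E = (\<Sum>i\<in>E. w i)"

definition triple_norm :: "nat \<Rightarrow> nat \<Rightarrow> (nat \<Rightarrow> real) \<Rightarrow> (nat \<Rightarrow> real) \<Rightarrow> real \<Rightarrow> (nat \<Rightarrow> nat \<Rightarrow> real) \<Rightarrow> real" where
  "triple_norm m n \<mu> \<nu> t a =
     (SUP EF \<in> {(E, F). E \<subseteq> {1..m} \<and> E \<noteq> {} \<and> F \<subseteq> {1..n} \<and> F \<noteq> {}}.
        l1_norm m n \<mu> \<nu> (ind_mult (fst EF \<times> snd EF) a)
          / max (meas \<mu> (fst EF)) (meas \<nu> (snd EF) / t))"

definition K_func :: "nat \<Rightarrow> nat \<Rightarrow> (nat \<Rightarrow> real) \<Rightarrow> (nat \<Rightarrow> real) \<Rightarrow> real \<Rightarrow> (nat \<Rightarrow> nat \<Rightarrow> real) \<Rightarrow> real" where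
  "K_func m n \<mu> \<nu> t a =
     Inf {row_norm m n \<nu> b + t * col_norm m n \<mu> c | b c.
            \<forall>i\<in>{1..m}. \<forall>j\<in>{1..n}. a i j = b i j + c i j}"

end

theory Submission
  imports Defs
begin
lemma split_core:
  fixes w :: "nat \<Rightarrow> nat \<Rightarrow> real" and p q :: "nat \<Rightarrow> real"
  assumes "finite E" "finite F" "\<forall>i\<in>E. p i \<ge> 0" "\<forall>j\<in>F. q j \<ge> 0"
    and "\<forall>E'\<subseteq>E. \<forall>F'\<subseteq>F. E' \<noteq> {} \<longrightarrow> F' \<noteq> {} \<longrightarrow>
          (\<Sum>i\<in>E'. \<Sum>j\<in>F'. w i j) \<le> max (sum p E') (sum q F')"
  shows "\<exists>A. (\<forall>i\<in>E. (\<Sum>j\<in>F. if (i,j)\<in>A then w i j else 0) \<le> p i) \<and>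
             (\<forall>j\<in>F. (\<Sum>i\<in>E. if (i,j)\<in>A then 0 else w i j) \<le> q j)"
  using assms
proof (induction "card E + card F" arbitrary: E F rule: less_induct)
  case less
  show ?case
  proof (cases "E = {} \<or> F = {}")
    case True
    then show ?thesis using less.prems by (intro exI[of _ "{}"]) auto
  next
    case False
    then have tot: "(\<Sum>i\<in>E. \<Sum>j\<in>F. w i j) \<le> max (sum p E) (sum q F)"
      using less.prems(5) by blast
    show ?thesis
    proof (cases "(\<Sum>i\<in>E. \<Sum>j\<in>F. w i j) \<le> sum p E")
      case True
      have "\<exists>i\<in>E. (\<Sum>j\<in>F. w i j) \<le> p i"
      proof (rule ccontr)
        assume "\<not> ?thesis"
        then have "sum p E < (\<Sum>i\<in>E. \<Sum>j\<in>F. w i j)"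
          using False less.prems(1) by (intro sum_strict_mono) auto
        with True show False by simp
      qed
      then obtain i where i: "i \<in> E" "(\<Sum>j\<in>F. w i j) \<le> p i" by blast
      have cd: "card (E - {i}) + card F < card E + card F"
        using card_Diff1_less[OF less.prems(1) i(1)] by simp
      have H': "\<forall>E'\<subseteq>E - {i}. \<forall>F'\<subseteq>F. E' \<noteq> {} \<longrightarrow> F' \<noteq> {} \<longrightarrow>
          (\<Sum>i\<in>E'. \<Sum>j\<in>F'. w i j) \<le> max (sum p E') (sum q F')"
        using less.prems(5) by (meson Diff_subset subset_trans)
      from less.hyps[OF cd _ less.prems(2) _ less.prems(4) H'] obtain A' where A':
        "\<forall>i'\<in>E - {i}. (\<Sum>j\<in>F. if (i',j)\<in>A' then w i' j else 0) \<le> p i'"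
        "\<forall>j\<in>F. (\<Sum>i'\<in>E - {i}. if (i',j)\<in>A' then 0 else w i' j) \<le> q j"
        using less.prems by auto
      define A where "A = A' \<union> ({i} \<times> UNIV)"
      show ?thesis
      proof (intro exI[of _ A] conjI ballI)
        fix i' assume "i' \<in> E"
        show "(\<Sum>j\<in>F. if (i',j)\<in>A then w i' j else 0) \<le> p i'"
        proof (cases "i' = i")
          case True then show ?thesis using i by (simp add: A_def)
        next
          case False then show ?thesis using A'(1) \<open>i' \<in> E\<close> by (simp add: A_def)
        qed
      next
        fix j assume j: "j \<in> F"
        have "(\<Sum>i'\<in>E. if (i',j)\<in>A then 0 else w i' j) = (\<Sum>i'\<in>E - {i}. if (i',j)\<in>A then 0 else w i' j)"
          using i less.prems(1) by (subst sum.remove[of E i]) (auto simp: A_def)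
        also have "\<dots> = (\<Sum>i'\<in>E - {i}. if (i',j)\<in>A' then 0 else w i' j)"
          by (intro sum.cong) (auto simp: A_def)
        finally show "(\<Sum>i'\<in>E. if (i',j)\<in>A then 0 else w i' j) \<le> q j" using A'(2) j by simp
      qed
    next
      case False2: False
      with tot have True: "(\<Sum>i\<in>E. \<Sum>j\<in>F. w i j) \<le> sum q F" by simp
      have sw: "(\<Sum>i\<in>E. \<Sum>j\<in>F. w i j) = (\<Sum>j\<in>F. \<Sum>i\<in>E. w i j)" by (rule sum.swap)
      have "\<exists>j\<in>F. (\<Sum>i\<in>E. w i j) \<le> q j"
      proof (rule ccontr)
        assume "\<not> ?thesis"
        then have "sum q F < (\<Sum>j\<in>F. \<Sum>i\<in>E. w i j)"
          using False less.prems(2) by (intro sum_strict_mono) auto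
        with True sw show False by simp
      qed
      then obtain j where j: "j \<in> F" "(\<Sum>i\<in>E. w i j) \<le> q j" by blast
      have cd: "card E + card (F - {j}) < card E + card F"
        using card_Diff1_less[OF less.prems(2) j(1)] by simp
      have H': "\<forall>E'\<subseteq>E. \<forall>F'\<subseteq>F - {j}. E' \<noteq> {} \<longrightarrow> F' \<noteq> {} \<longrightarrow>
          (\<Sum>i\<in>E'. \<Sum>j\<in>F'. w i j) \<le> max (sum p E') (sum q F')"
        using less.prems(5) by (meson Diff_subset subset_trans)
      from less.hyps[OF cd less.prems(1) _ less.prems(3) _ H'] obtain A' where A':
        "\<forall>i\<in>E. (\<Sum>j'\<in>F - {j}. if (i,j')\<in>A' then w i j' else 0) \<le> p i"
        "\<forall>j'\<in>F - {j}. (\<Sum>i\<in>E. if (i,j')\<in>A' then 0 else w i j') \<le> q j'"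
        using less.prems by auto
      define A where "A = A' - (UNIV \<times> {j})"
      show ?thesis
      proof (intro exI[of _ A] conjI ballI)
        fix j' assume "j' \<in> F"
        show "(\<Sum>i\<in>E. if (i,j')\<in>A then 0 else w i j') \<le> q j'"
        proof (cases "j' = j")
          case True then show ?thesis using j by (simp add: A_def)
        next
          case False then show ?thesis using A'(2) \<open>j' \<in> F\<close> by (simp add: A_def)
        qed
      next
        fix i assume i: "i \<in> E"
        have "(\<Sum>j'\<in>F. if (i,j')\<in>A then w i j' else 0) = (\<Sum>j'\<in>F - {j}. if (i,j')\<in>A then w i j' else 0)"
          using j less.prems(2) by (subst sum.remove[of F j]) (auto simp: A_def)
        also have "\<dots> = (\<Sum>j'\<in>F - {j}. if (i,j')\<in>A' then w i j' else 0)"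
          by (intro sum.cong) (auto simp: A_def)
        finally show "(\<Sum>j'\<in>F. if (i,j')\<in>A then w i j' else 0) \<le> p i" using A'(1) i by simp
      qed
    qed
  qed
qed

lemma l1_ind:
  assumes "E \<subseteq> {1..m}" "F \<subseteq> {1..n}"
  shows "l1_norm m n \<mu> \<nu> (ind_mult (E \<times> F) a) = (\<Sum>i\<in>E. \<Sum>j\<in>F. \<bar>a i j\<bar> * \<mu> i * \<nu> j)"
proof -
  have "l1_norm m n \<mu> \<nu> (ind_mult (E \<times> F) a) =
    (\<Sum>i\<in>{1..m}. if i \<in> E then (\<Sum>j\<in>{1..n}. if j \<in> F then \<bar>a i j\<bar> * \<mu> i * \<nu> j else 0) else 0)"
    unfolding l1_norm_def ind_mult_def by (auto intro!: sum.cong)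
  also have "\<dots> = (\<Sum>i\<in>{1..m} \<inter> E. \<Sum>j\<in>{1..n} \<inter> F. \<bar>a i j\<bar> * \<mu> i * \<nu> j)"
    by (simp only: sum.inter_restrict[OF finite_atLeastAtMost, symmetric])
  also have "\<dots> = (\<Sum>i\<in>E. \<Sum>j\<in>F. \<bar>a i j\<bar> * \<mu> i * \<nu> j)"
    using assms by (simp add: Int_absorb1)
  finally show ?thesis .
qed

lemma row_norm_nonneg:
  assumes "m \<ge> 1" "\<And>j. j \<in> {1..n} \<Longrightarrow> \<nu> j > 0"
  shows "0 \<le> row_norm m n \<nu> b"
proof -
  have "0 \<le> (\<Sum>j\<in>{1..n}. \<bar>b 1 j\<bar> * \<nu> j)"
    using assms by (intro sum_nonneg) (simp add: less_imp_le)
  also have "\<dots> \<le> row_norm m n \<nu> b" unfolding row_norm_def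
    using assms by (intro Max_ge) auto
  finally show ?thesis .
qed

lemma col_norm_nonneg:
  assumes "n \<ge> 1" "\<And>i. i \<in> {1..m} \<Longrightarrow> \<mu> i > 0"
  shows "0 \<le> col_norm m n \<mu> b"
proof -
  have "0 \<le> (\<Sum>i\<in>{1..m}. \<bar>b i 1\<bar> * \<mu> i)"
    using assms by (intro sum_nonneg) (simp add: less_imp_le)
  also have "\<dots> \<le> col_norm m n \<mu> b" unfolding col_norm_def
    using assms by (intro Max_ge) auto
  finally show ?thesis .
qed

lemma split_s:
  fixes m n :: nat and \<mu> \<nu> :: "nat \<Rightarrow> real" and t s :: real
  assumes "m \<ge> 1" and "n \<ge> 1"
    and mu: "\<And>i. i \<in> {1..m} \<Longrightarrow> \<mu> i > 0"
    and nu: "\<And>j. j \<in> {1..n} \<Longrightarrow> \<nu> j > 0"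
    and t: "t > 0" and s: "s \<ge> 0"
    and R: "\<And>E F. E \<subseteq> {1..m} \<Longrightarrow> E \<noteq> {} \<Longrightarrow> F \<subseteq> {1..n} \<Longrightarrow> F \<noteq> {} \<Longrightarrow>
       l1_norm m n \<mu> \<nu> (ind_mult (E \<times> F) a) / max (meas \<mu> E) (meas \<nu> F / t) \<le> s"
  shows "\<exists>A B. A \<union> B = {1..m} \<times> {1..n} \<and> A \<inter> B = {} \<and>
                   row_norm m n \<nu> (ind_mult A a) \<le> s \<and>
                   col_norm m n \<mu> (ind_mult B a) \<le> s / t"
proof -
  define w where "w = (\<lambda>i j. \<bar>a i j\<bar> * \<mu> i * \<nu> j)"
  have H: "\<forall>E'\<subseteq>{1..m}. \<forall>F'\<subseteq>{1..n}. E' \<noteq> {} \<longrightarrow> F' \<noteq> {} \<longrightarrow>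
          (\<Sum>i\<in>E'. \<Sum>j\<in>F'. w i j) \<le> max (sum (\<lambda>i. s * \<mu> i) E') (sum (\<lambda>j. s * \<nu> j / t) F')"
  proof (intro allI impI)
    fix E' F' assume E': "E' \<subseteq> {1..m}" and F': "F' \<subseteq> {1..n}" and ne: "E' \<noteq> {}" "F' \<noteq> {}"
    have fE: "finite E'" using E' finite_subset by blast
    have "meas \<mu> E' > 0" unfolding meas_def using fE ne E' mu
      by (intro sum_pos) auto
    then have mpos: "max (meas \<mu> E') (meas \<nu> F' / t) > 0" by linarith
    have "(\<Sum>i\<in>E'. \<Sum>j\<in>F'. w i j) / max (meas \<mu> E') (meas \<nu> F' / t) \<le> s"
      using R[OF E' ne(1) F' ne(2)] l1_ind[OF E' F'] by (simp add: w_def)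
    then have "(\<Sum>i\<in>E'. \<Sum>j\<in>F'. w i j) \<le> s * max (meas \<mu> E') (meas \<nu> F' / t)"
      using mpos by (simp add: divide_le_eq)
    also have "\<dots> = max (s * meas \<mu> E') (s * meas \<nu> F' / t)"
      using s by (simp add: max_mult_distrib_left)
    also have "\<dots> = max (sum (\<lambda>i. s * \<mu> i) E') (sum (\<lambda>j. s * \<nu> j / t) F')"
      by (simp add: meas_def sum_distrib_left sum_divide_distrib)
    finally show "(\<Sum>i\<in>E'. \<Sum>j\<in>F'. w i j) \<le> max (sum (\<lambda>i. s * \<mu> i) E') (sum (\<lambda>j. s * \<nu> j / t) F')" .
  qed
  obtain A where A:
    "\<forall>i\<in>{1..m}. (\<Sum>j\<in>{1..n}. if (i,j)\<in>A then w i j else 0) \<le> s * \<mu> i"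
    "\<forall>j\<in>{1..n}. (\<Sum>i\<in>{1..m}. if (i,j)\<in>A then 0 else w i j) \<le> s * \<nu> j / t"
  proof -
    have "\<forall>i\<in>{1..m}. 0 \<le> s * \<mu> i" using mu s by (simp add: less_imp_le)
    moreover have "\<forall>j\<in>{1..n}. 0 \<le> s * \<nu> j / t" using nu s t by (simp add: less_imp_le)
    ultimately show ?thesis using split_core[OF _ _ _ _ H] that by blast
  qed
  define A0 where "A0 = A \<inter> ({1..m} \<times> {1..n})"
  define B where "B = ({1..m} \<times> {1..n}) - A0"
  have row: "row_norm m n \<nu> (ind_mult A0 a) \<le> s"
    unfolding row_norm_def
  proof (subst Max_le_iff, simp, use \<open>m \<ge> 1\<close> in simp, intro ballI)
    fix x assume "x \<in> (\<lambda>i. \<Sum>j = 1..n. \<bar>ind_mult A0 a i j\<bar> * \<nu> j) ` {1..m}"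
    then obtain i where i: "i \<in> {1..m}" and x: "x = (\<Sum>j = 1..n. \<bar>ind_mult A0 a i j\<bar> * \<nu> j)" by blast
    have "\<mu> i * x = (\<Sum>j\<in>{1..n}. if (i,j)\<in>A then w i j else 0)"
      unfolding x sum_distrib_left using i
      by (intro sum.cong) (auto simp: ind_mult_def A0_def w_def)
    also have "\<dots> \<le> \<mu> i * s" using A(1) i by (simp add: mult.commute)
    finally show "x \<le> s" using mu[OF i] by simp
  qed
  have col: "col_norm m n \<mu> (ind_mult B a) \<le> s / t"
    unfolding col_norm_def
  proof (subst Max_le_iff, simp, use \<open>n \<ge> 1\<close> in simp, intro ballI)
    fix x assume "x \<in> (\<lambda>j. \<Sum>i = 1..m. \<bar>ind_mult B a i j\<bar> * \<mu> i) ` {1..n}"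
    then obtain j where j: "j \<in> {1..n}" and x: "x = (\<Sum>i = 1..m. \<bar>ind_mult B a i j\<bar> * \<mu> i)" by blast
    have "\<nu> j * x = (\<Sum>i\<in>{1..m}. if (i,j)\<in>A then 0 else w i j)"
      unfolding x sum_distrib_left using j
      by (intro sum.cong) (auto simp: ind_mult_def A0_def B_def w_def)
    also have "\<dots> \<le> \<nu> j * (s / t)" using A(2) j by (simp add: mult.commute)
    finally have "\<nu> j * x \<le> \<nu> j * (s / t)" .
    then show "x \<le> s / t" using mult_le_cancel_left_pos[OF nu[OF j]] by blast
  qed
  have u: "A0 \<union> B = {1..m} \<times> {1..n}" by (auto simp: B_def A0_def)
  have d: "A0 \<inter> B = {}" by (auto simp: B_def)
  show ?thesis using u d row col by blast
qed

lemma ratio_le: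
  assumes "E \<subseteq> {1..m}" "E \<noteq> {}" "F \<subseteq> {1..n}" "F \<noteq> {}"
  shows "l1_norm m n \<mu> \<nu> (ind_mult (E \<times> F) a) / max (meas \<mu> E) (meas \<nu> F / t)
         \<le> triple_norm m n \<mu> \<nu> t a"
proof -
  let ?I = "{(E, F). E \<subseteq> {1..m} \<and> E \<noteq> {} \<and> F \<subseteq> {1..n} \<and> F \<noteq> {}}"
  have fin: "finite ?I"
    by (rule finite_subset[of _ "Pow {1..m} \<times> Pow {1..n}"]) auto
  let ?f = "\<lambda>EF. l1_norm m n \<mu> \<nu> (ind_mult (fst EF \<times> snd EF) a)
          / max (meas \<mu> (fst EF)) (meas \<nu> (snd EF) / t)"
  have "?f (E, F) \<le> (SUP EF \<in> ?I. ?f EF)"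
    by (rule cSUP_upper) (use assms fin in \<open>auto intro: bdd_above_finite\<close>)
  then show ?thesis unfolding triple_norm_def by simp
qed

theorem proposition1p1:
  fixes m n :: nat and \<mu> \<nu> :: "nat \<Rightarrow> real" and t :: real
  assumes "m \<ge> 1" and "n \<ge> 1"
    and "\<And>i. i \<in> {1..m} \<Longrightarrow> \<mu> i > 0"
    and "\<And>j. j \<in> {1..n} \<Longrightarrow> \<nu> j > 0"
    and "t > 0"
  shows "(\<forall>a. triple_norm m n \<mu> \<nu> t a \<le> 1 \<longrightarrow>
            (\<exists>A B. A \<union> B = {1..m} \<times> {1..n} \<and> A \<inter> B = {} \<and>
                   row_norm m n \<nu> (ind_mult A a) \<le> 1 \<and>
                   col_norm m n \<mu> (ind_mult B a) \<le> 1 / t))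
       \<and> (\<forall>a. K_func m n \<mu> \<nu> t a \<le> 2 * triple_norm m n \<mu> \<nu> t a)"
proof (intro conjI allI impI)
  fix a assume h: "triple_norm m n \<mu> \<nu> t a \<le> 1"
  show "\<exists>A B. A \<union> B = {1..m} \<times> {1..n} \<and> A \<inter> B = {} \<and>
                   row_norm m n \<nu> (ind_mult A a) \<le> 1 \<and>
                   col_norm m n \<mu> (ind_mult B a) \<le> 1 / t"
  proof (rule split_s[OF assms zero_le_one])
    fix E F assume "E \<subseteq> {1..m}" "E \<noteq> {}" "F \<subseteq> {1..n}" "F \<noteq> {}"
    from order.trans[OF ratio_le[OF this] h]
    show "l1_norm m n \<mu> \<nu> (ind_mult (E \<times> F) a) / max (meas \<mu> E) (meas \<nu> F / t) \<le> 1" .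
  qed
next
  fix a
  let ?s = "triple_norm m n \<mu> \<nu> t a"
  have "0 \<le> l1_norm m n \<mu> \<nu> (ind_mult ({1} \<times> {1}) a) / max (meas \<mu> {1}) (meas \<nu> {1} / t)"
    unfolding l1_norm_def meas_def using assms
    by (intro divide_nonneg_nonneg sum_nonneg mult_nonneg_nonneg) (auto simp: less_imp_le max_def)
  also have "\<dots> \<le> ?s" by (rule ratio_le) (use assms in auto)
  finally have s0: "0 \<le> ?s" .
  obtain A B where AB: "A \<union> B = {1..m} \<times> {1..n}" "A \<inter> B = {}"
      "row_norm m n \<nu> (ind_mult A a) \<le> ?s" "col_norm m n \<mu> (ind_mult B a) \<le> ?s / t"
    using split_s[OF assms s0 ratio_le] by blast
  let ?S = "{row_norm m n \<nu> b + t * col_norm m n \<mu> c | b c.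
            \<forall>i\<in>{1..m}. \<forall>j\<in>{1..n}. a i j = b i j + c i j}"
  have mem: "row_norm m n \<nu> (ind_mult A a) + t * col_norm m n \<mu> (ind_mult B a) \<in> ?S"
  proof -
    have "\<forall>i\<in>{1..m}. \<forall>j\<in>{1..n}. a i j = ind_mult A a i j + ind_mult B a i j"
      using AB(1,2) unfolding ind_mult_def by auto
    then show ?thesis by blast
  qed
  have bdd: "bdd_below ?S"
  proof (rule bdd_belowI[of _ 0])
    fix x assume "x \<in> ?S"
    then obtain b c where "x = row_norm m n \<nu> b + t * col_norm m n \<mu> c" by blast
    moreover have "0 \<le> row_norm m n \<nu> b" by (rule row_norm_nonneg) (use assms in auto)
    moreover have "0 \<le> col_norm m n \<mu> c" by (rule col_norm_nonneg) (use assms in auto)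
    ultimately show "0 \<le> x" using assms(5) by simp
  qed
  have "K_func m n \<mu> \<nu> t a \<le> row_norm m n \<nu> (ind_mult A a) + t * col_norm m n \<mu> (ind_mult B a)"
    unfolding K_func_def by (rule cInf_lower[OF mem bdd])
  also have "\<dots> \<le> ?s + t * (?s / t)"
    using AB(3,4) assms(5) by (intro add_mono mult_left_mono) auto
  also have "\<dots> = 2 * ?s" using assms(5) by simp
  finally show "K_func m n \<mu> \<nu> t a \<le> 2 * ?s" .
qed

end
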